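(* The containment relation $\ge$ is a partial order on the set $[\mathrm{Cay}]$ of equivalence classes of Cayley permutations.
   Context: A Cayley permutation is a word of positive integers in which every integer from $1$ to its maximum occurs; $\mathrm{Cay}$ is the set of all of them. Containment $y\le x$: indices $i_1<\dots<i_k$ ($k$ the length of $y$) with $x(i_s)<x(i_t)\iff y(s)<y(t)$ and $x(i_s)=x(i_t)\iff y(s)=y(t)$. For $x$ of length $n$, $\gamma(x)$ is the permutation obtained by sorting the pairs $(x(i),i)$ increasingly by first coordinate, ties by decreasing second coordinate, and reading the second coordinates. $x\sim y$ iff $\gamma(x)=\gamma(y)$; $[x]$ is the class of $x$ and $[\mathrm{Cay}]$ the set of classes. For classes, $[x]\ge[y]$ iff $x'\ge y'$ for some $x'\in[x]$ and $y'\in[y]$. *)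

theory Defs
  imports Main "HOL-Library.Product_Lexorder"
begin

text \<open>The empty word is included (its set of values is the empty interval).\<close>
definition Cay :: "nat list set" where
  "Cay = {x. set x = {1..Max (insert 0 (set x))}}"

definition contains :: "nat list \<Rightarrow> nat list \<Rightarrow> bool" where
  "contains x y \<longleftrightarrow> (\<exists>f :: nat \<Rightarrow> nat.
      (\<forall>s t. s < t \<and> t < length y \<longrightarrow> f s < f t) \<and>
      (\<forall>s < length y. f s < length x) \<and>
      (\<forall>s < length y. \<forall>t < length y.
          (x ! f s < x ! f t \<longleftrightarrow> y ! s < y ! t) \<and>
          (x ! f s = x ! f t \<longleftrightarrow> y ! s = y ! t)))"

definition gamma :: "nat list \<Rightarrow> nat list" where
  "gamma x = map snd (sort_key (\<lambda>(v, i). (v, - int i)) (zip x [1..<length x + 1]))"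

definition cay_equiv :: "(nat list \<times> nat list) set" where
  "cay_equiv = {(x, y). x \<in> Cay \<and> y \<in> Cay \<and> gamma x = gamma y}"

definition Cay_classes :: "nat list set set" where
  "Cay_classes = Cay // cay_equiv"

definition class_ge :: "nat list set \<Rightarrow> nat list set \<Rightarrow> bool" where
  "class_ge X Y \<longleftrightarrow> (\<exists>x'\<in>X. \<exists>y'\<in>Y. contains x' y')"

end

theory Submission
  imports Defs
begin

definition kf :: "nat \<times> nat \<Rightarrow> nat \<times> int" where
  "kf = (\<lambda>(v, i). (v, - int i))"

definition LL :: "nat list \<Rightarrow> (nat \<times> nat) list" where
  "LL x = sort_key kf (zip x [1..<length x + 1])"

lemma gamma_LL: "gamma x = map snd (LL x)"
  by (simp add: gamma_def LL_def kf_def)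

lemma length_LL[simp]: "length (LL x) = length x"
  by (simp add: LL_def del: upt_Suc)

lemma set_LL: "set (LL x) = {(x!i, Suc i) | i. i < length x}"
proof -
  have "set (zip x [1..<length x + 1]) = {(x!i, Suc i) | i. i < length x}"
    by (auto simp: set_zip simp del: upt_Suc)
  then show ?thesis by (simp add: LL_def)
qed

lemma distinct_LL: "distinct (LL x)"
  by (simp add: LL_def distinct_zipI2 del: upt_Suc)

lemma sorted_LL: "sorted (map kf (LL x))"
  by (simp add: LL_def)

lemma kf_inj: "kf a = kf b \<Longrightarrow> a = b"
  by (cases a; cases b) (auto simp: kf_def)

lemma LL_strict:
  assumes "r < s" "s < length x"
  shows "kf (LL x ! r) < kf (LL x ! s)"
proof -
  have "kf (LL x ! r) \<le> kf (LL x ! s)"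
    using sorted_LL[of x] assms by (auto simp: sorted_iff_nth_mono)
  moreover have "LL x ! r \<noteq> LL x ! s"
    using distinct_LL[of x] assms by (simp add: nth_eq_iff_index_eq)
  ultimately show ?thesis using kf_inj by (metis order_le_imp_less_or_eq)
qed

lemma LL_nth: "r < length x \<Longrightarrow> \<exists>i < length x. LL x ! r = (x!i, Suc i)"
proof -
  assume "r < length x"
  then have "LL x ! r \<in> set (LL x)" by simp
  then show ?thesis by (auto simp: set_LL)
qed

lemma length_gamma[simp]: "length (gamma x) = length x"
  by (simp add: gamma_LL)

lemma gamma_nth: "r < length x \<Longrightarrow> gamma x ! r = snd (LL x ! r)"
  by (simp add: gamma_LL)

lemma distinct_gamma: "distinct (gamma x)"
proof -
  have "inj_on snd (set (LL x))" by (auto simp: set_LL inj_on_def)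
  then show ?thesis using distinct_LL[of x] by (simp add: gamma_LL distinct_map)
qed

definition pos :: "nat list \<Rightarrow> nat \<Rightarrow> nat" where
  "pos x i = (THE r. r < length x \<and> gamma x ! r = Suc i)"

lemma pos_ex: "i < length x \<Longrightarrow> \<exists>r. r < length x \<and> LL x ! r = (x!i, Suc i)"
proof -
  assume "i < length x"
  then have "(x!i, Suc i) \<in> set (LL x)" by (auto simp: set_LL)
  then show ?thesis by (metis in_set_conv_nth length_LL)
qed

lemma pos_props:
  assumes "i < length x"
  shows "pos x i < length x \<and> gamma x ! pos x i = Suc i \<and> LL x ! pos x i = (x!i, Suc i)"
proof -
  obtain r where r: "r < length x" "LL x ! r = (x!i, Suc i)" using pos_ex assms by blast
  have g: "gamma x ! r = Suc i" using r by (simp add: gamma_nth)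
  have "pos x i = r" unfolding pos_def
  proof (rule the_equality)
    show "r < length x \<and> gamma x ! r = Suc i" using r g by simp
    fix r' assume "r' < length x \<and> gamma x ! r' = Suc i"
    then show "r' = r" using nth_eq_iff_index_eq[OF distinct_gamma[of x], of r' r] r g by simp
  qed
  then show ?thesis using r g by simp
qed

lemma pos_inj:
  assumes i: "i < length x" and j: "j < length x"
  shows "pos x i = pos x j \<longleftrightarrow> i = j"
proof
  assume "pos x i = pos x j"
  then have "Suc i = Suc j" using pos_props[OF i] pos_props[OF j] by metis
  then show "i = j" by simp
qed simp

lemma pos_surj: "r < length x \<Longrightarrow> \<exists>i < length x. pos x i = r"
proof -
  assume r: "r < length x"
  obtain i where i: "i < length x" "LL x ! r = (x!i, Suc i)" using LL_nth[OF r] by (elim exE conjE)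
  have e: "LL x ! pos x i = LL x ! r" using pos_props[OF i(1)] i(2) by simp
  have l: "pos x i < length (LL x)" "r < length (LL x)" using pos_props[OF i(1)] r by auto
  have "pos x i = r" using iffD1[OF nth_eq_iff_index_eq[OF distinct_LL l] e] .
  then show ?thesis using i by blast
qed

lemma pos_less:
  assumes "i < length x" "j < length x"
  shows "pos x i < pos x j \<longleftrightarrow> (x!i < x!j \<or> x!i = x!j \<and> j < i)"
proof -
  have key: "kf (x!i, Suc i) < kf (x!j, Suc j) \<longleftrightarrow> (x!i < x!j \<or> x!i = x!j \<and> j < i)"
    by (auto simp: kf_def less_prod_def)
  have A: "pos x i < pos x j \<Longrightarrow> kf (x!i, Suc i) < kf (x!j, Suc j)"
    using LL_strict[of "pos x i" "pos x j" x] pos_props[OF assms(1)] pos_props[OF assms(2)] by simp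
  have B: "pos x j < pos x i \<Longrightarrow> kf (x!j, Suc j) < kf (x!i, Suc i)"
    using LL_strict[of "pos x j" "pos x i" x] pos_props[OF assms(1)] pos_props[OF assms(2)] by simp
  show ?thesis
  proof
    assume "pos x i < pos x j" then show "x!i < x!j \<or> x!i = x!j \<and> j < i" using A key by blast
  next
    assume h: "x!i < x!j \<or> x!i = x!j \<and> j < i"
    show "pos x i < pos x j"
    proof (rule ccontr)
      assume "\<not> pos x i < pos x j"
      then have "pos x j < pos x i \<or> pos x i = pos x j" by auto
      then show False
      proof
        assume "pos x j < pos x i"
        then have "kf (x!j, Suc j) < kf (x!i, Suc i)" by (rule B)
        then show False using h key by auto
      next
        assume "pos x i = pos x j" then have "i = j" using pos_inj assms by blast
        then show False using h by simp
      qed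
    qed
  qed
qed

definition pp :: "nat list \<Rightarrow> nat list" where
  "pp x = map (\<lambda>i. Suc (pos x i)) [0..<length x]"

lemma length_pp[simp]: "length (pp x) = length x"
  by (simp add: pp_def)

lemma pp_nth: "i < length x \<Longrightarrow> pp x ! i = Suc (pos x i)"
  by (simp add: pp_def)

lemma pp_less:
  "i < length x \<Longrightarrow> j < length x \<Longrightarrow>
     pp x ! i < pp x ! j \<longleftrightarrow> (x!i < x!j \<or> x!i = x!j \<and> j < i)"
  by (simp add: pp_nth pos_less)

lemma distinct_pp: "distinct (pp x)"
  unfolding distinct_conv_nth by (simp add: pp_nth pos_inj)

lemma set_pp: "set (pp x) = {1..length x}"
proof
  show "set (pp x) \<subseteq> {1..length x}"
    using pos_props by (auto simp: in_set_conv_nth pp_nth Suc_le_eq)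
  show "{1..length x} \<subseteq> set (pp x)"
  proof
    fix m assume m: "m \<in> {1..length x}"
    then obtain r where r: "m = Suc r" "r < length x" by (cases m) auto
    obtain i where "i < length x" "pos x i = r" using pos_surj[OF r(2)] by blast
    then show "m \<in> set (pp x)" using r by (auto simp: in_set_conv_nth pp_nth)
  qed
qed

definition isperm :: "nat list \<Rightarrow> bool" where
  "isperm u \<longleftrightarrow> distinct u \<and> set u = {1..length u}"

lemma isperm_pp: "isperm (pp x)"
  by (simp add: isperm_def distinct_pp set_pp)

lemma rank:
  assumes "isperm u" "i < length u"
  shows "card {j. j < length u \<and> u!j < u!i} = u!i - 1"
proof -
  have inj: "inj_on (nth u) {j. j < length u \<and> u!j < u!i}"
    using assms(1) by (auto simp: inj_on_def isperm_def nth_eq_iff_index_eq)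
  have ui: "u!i \<in> {1..length u}" using assms nth_mem unfolding isperm_def by blast
  have "nth u ` {j. j < length u \<and> u!j < u!i} = {1..<u!i}"
  proof
    show "nth u ` {j. j < length u \<and> u!j < u!i} \<subseteq> {1..<u!i}"
      using assms(1) nth_mem unfolding isperm_def by fastforce
    show "{1..<u!i} \<subseteq> nth u ` {j. j < length u \<and> u!j < u!i}"
    proof
      fix m assume m: "m \<in> {1..<u!i}"
      then have "m \<in> set u" using ui assms(1) unfolding isperm_def by auto
      then obtain j where "j < length u" "u!j = m" by (auto simp: in_set_conv_nth)
      then show "m \<in> nth u ` {j. j < length u \<and> u!j < u!i}" using m by auto
    qed
  qed
  then have "card {j. j < length u \<and> u!j < u!i} = card {1..<u!i}"
    using card_image[OF inj] by simp
  then show ?thesis by simp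
qed

lemma perm_unique:
  assumes "isperm u" "isperm v" "length u = length v"
    "\<And>i j. i < length u \<Longrightarrow> j < length u \<Longrightarrow> u!i < u!j \<longleftrightarrow> v!i < v!j"
  shows "u = v"
proof (rule nth_equalityI)
  show "length u = length v" by fact
  fix i assume i: "i < length u"
  have "{j. j < length u \<and> u!j < u!i} = {j. j < length v \<and> v!j < v!i}"
    using assms(3,4) i by auto
  then have "u!i - 1 = v!i - 1" using rank[OF assms(1) i] rank[OF assms(2)] i assms(3) by simp
  moreover have "u!i \<ge> 1" "v!i \<ge> 1"
    using assms(1,2,3) i nth_mem unfolding isperm_def by (metis atLeastAtMost_iff)+
  ultimately show "u!i = v!i" by simp
qed

lemma pp_pp: "pp (pp x) = pp x"
proof (rule perm_unique[OF isperm_pp isperm_pp])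
  show "length (pp (pp x)) = length (pp x)" by simp
  fix i j assume "i < length (pp (pp x))" "j < length (pp (pp x))"
  then have i: "i < length x" and j: "j < length x" by auto
  have "pp x ! i = pp x ! j \<longleftrightarrow> i = j"
    using distinct_pp[of x] i j by (simp add: nth_eq_iff_index_eq)
  then show "pp (pp x) ! i < pp (pp x) ! j \<longleftrightarrow> pp x ! i < pp x ! j"
    using pp_less[of i "pp x" j] i j by auto
qed

lemma pp_eq_gamma: "pp x = pp y \<Longrightarrow> gamma x = gamma y"
proof -
  assume e: "pp x = pp y"
  then have len: "length x = length y" by (metis length_pp)
  show ?thesis
  proof (rule nth_equalityI)
    show "length (gamma x) = length (gamma y)" using len by simp
    fix r assume "r < length (gamma x)"
    then have r: "r < length x" by simp
    obtain i where i: "i < length x" "pos x i = r" using pos_surj[OF r] by blast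
    have "pp y ! i = Suc r" using e i pp_nth by metis
    then have "pos y i = r" using i len pp_nth by fastforce
    then show "gamma x ! r = gamma y ! r" using pos_props[OF i(1)] pos_props[of i y] i len by simp
  qed
qed

lemma gamma_eq_pp: "gamma x = gamma y \<Longrightarrow> pp x = pp y"
proof -
  assume e: "gamma x = gamma y"
  then have len: "length x = length y" by (metis length_gamma)
  have "pos x = pos y" using e len by (simp add: pos_def fun_eq_iff)
  then show ?thesis using len by (simp add: pp_def)
qed

lemma gamma_pp: "gamma (pp x) = gamma x"
  by (rule pp_eq_gamma) (simp add: pp_pp)

lemma pp_Cay: "pp x \<in> Cay"
proof -
  have e: "insert 0 {1..length x} = {0..length x}" by auto
  have "Max {0..length x} = length x"
    by (rule Max_eqI) auto
  then have "Max (insert 0 {1..length x}) = length x" using e by simp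
  then show ?thesis by (simp add: Cay_def set_pp)
qed

lemma contains_refl: "contains x x"
  unfolding contains_def by (rule exI[of _ id]) auto

lemma contains_trans: "contains x y \<Longrightarrow> contains y z \<Longrightarrow> contains x z"
  unfolding contains_def
proof (elim exE conjE)
  fix f g
  assume f1: "\<forall>s t. s < t \<and> t < length y \<longrightarrow> f s < f t"
    and f2: "\<forall>s<length y. f s < length x"
    and f3: "\<forall>s<length y. \<forall>t<length y. (x ! f s < x ! f t) = (y ! s < y ! t) \<and> (x ! f s = x ! f t) = (y ! s = y ! t)"
    and g1: "\<forall>s t. s < t \<and> t < length z \<longrightarrow> g s < g t"
    and g2: "\<forall>s<length z. g s < length y"
    and g3: "\<forall>s<length z. \<forall>t<length z. (y ! g s < y ! g t) = (z ! s < z ! t) \<and> (y ! g s = y ! g t) = (z ! s = z ! t)"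
  show "\<exists>h. (\<forall>s t. s < t \<and> t < length z \<longrightarrow> h s < h t) \<and> (\<forall>s<length z. h s < length x) \<and>
      (\<forall>s<length z. \<forall>t<length z. (x ! h s < x ! h t) = (z ! s < z ! t) \<and> (x ! h s = x ! h t) = (z ! s = z ! t))"
  proof (rule exI[of _ "f \<circ> g"], intro conjI allI impI)
    fix s t assume "s < t \<and> t < length z"
    then show "(f \<circ> g) s < (f \<circ> g) t" using f1 g1 g2 by auto
  next
    fix s assume "s < length z" then show "(f \<circ> g) s < length x" using f2 g2 by auto
  next
    fix s t assume "s < length z" "t < length z"
    then show "(x ! (f \<circ> g) s < x ! (f \<circ> g) t) = (z ! s < z ! t)"
      and "(x ! (f \<circ> g) s = x ! (f \<circ> g) t) = (z ! s = z ! t)"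
      using f3 g2 g3 by auto
  qed
qed

lemma mono_iff:
  fixes s t m :: nat
  assumes "\<forall>s t. s < t \<and> t < m \<longrightarrow> f s < (f t::nat)" "s < m" "t < m"
  shows "f s < f t \<longleftrightarrow> s < t" and "f s = f t \<longleftrightarrow> s = t"
proof -
  have a: "s < t \<Longrightarrow> f s < f t" using assms by blast
  have b: "t < s \<Longrightarrow> f t < f s" using assms by blast
  show "f s < f t \<longleftrightarrow> s < t" using a b by (metis less_asym linorder_neqE_nat)
  show "f s = f t \<longleftrightarrow> s = t" using a b by (metis less_irrefl linorder_neqE_nat)
qed

lemma contains_pp: "contains x y \<Longrightarrow> contains (pp x) (pp y)"
  unfolding contains_def
proof (elim exE conjE)
  fix f
  assume f1: "\<forall>s t. s < t \<and> t < length y \<longrightarrow> f s < f t"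
    and f2: "\<forall>s<length y. f s < length x"
    and f3: "\<forall>s<length y. \<forall>t<length y. (x ! f s < x ! f t) = (y ! s < y ! t) \<and> (x ! f s = x ! f t) = (y ! s = y ! t)"
  show "\<exists>f. (\<forall>s t. s < t \<and> t < length (pp y) \<longrightarrow> f s < f t) \<and> (\<forall>s<length (pp y). f s < length (pp x)) \<and>
      (\<forall>s<length (pp y). \<forall>t<length (pp y). (pp x ! f s < pp x ! f t) = (pp y ! s < pp y ! t) \<and> (pp x ! f s = pp x ! f t) = (pp y ! s = pp y ! t))"
  proof (rule exI[of _ f], intro conjI allI impI)
    fix s t assume "s < t \<and> t < length (pp y)" then show "f s < f t" using f1 by simp
  next
    fix s assume "s < length (pp y)" then show "f s < length (pp x)" using f2 by simp
  next
    fix s t assume s: "s < length (pp y)" and t: "t < length (pp y)"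
    then have s': "s < length y" and t': "t < length y" by auto
    have fs: "f s < length x" "f t < length x" using f2 s' t' by auto
    have m: "f t < f s \<longleftrightarrow> t < s" "f s = f t \<longleftrightarrow> s = t"
      using mono_iff[OF f1 t' s'] mono_iff[OF f1 s' t'] by auto
    show "(pp x ! f s < pp x ! f t) = (pp y ! s < pp y ! t)"
      using pp_less[OF fs] pp_less[OF s' t'] f3 s' t' m by auto
    have "pp x ! f s = pp x ! f t \<longleftrightarrow> f s = f t"
      using distinct_pp[of x] fs by (simp add: nth_eq_iff_index_eq)
    moreover have "pp y ! s = pp y ! t \<longleftrightarrow> s = t"
      using distinct_pp[of y] s' t' by (simp add: nth_eq_iff_index_eq)
    ultimately show "(pp x ! f s = pp x ! f t) = (pp y ! s = pp y ! t)" using m by simp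
  qed
qed

lemma mono_id:
  assumes f1: "\<forall>s t. s < t \<and> t < n \<longrightarrow> f s < (f t::nat)" and f2: "\<forall>s<n. f s < n"
  shows "\<forall>s<n. f s = s"
proof -
  have lo: "s < n \<longrightarrow> s \<le> f s" for s
  proof (induction s)
    case 0 then show ?case by simp
  next
    case (Suc s)
    show ?case
    proof
      assume h: "Suc s < n"
      then have "s \<le> f s" using Suc by simp
      moreover have "f s < f (Suc s)" using f1[rule_format, of s "Suc s"] h by simp
      ultimately show "Suc s \<le> f (Suc s)" by simp
    qed
  qed
  have hi: "\<forall>s. s + d < n \<longrightarrow> f s + d < n" for d
  proof (induction d)
    case 0 then show ?case using f2 by simp
  next
    case (Suc d)
    show ?case
    proof (intro allI impI)
      fix s assume "s + Suc d < n"
      then have "f (Suc s) + d < n" using Suc.IH[rule_format, of "Suc s"] by simp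
      moreover have "f s < f (Suc s)" using f1[rule_format, of s "Suc s"] \<open>s + Suc d < n\<close> by simp
      ultimately
      show "f s + Suc d < n" by simp
    qed
  qed
  show ?thesis
  proof (intro allI impI)
    fix s assume s: "s < n"
    have "f s + (n - 1 - s) < n" using hi[of "n - 1 - s"] s by auto
    then show "f s = s" using lo[of s] s by linarith
  qed
qed

lemma contains_len: "contains x y \<Longrightarrow> length y \<le> length x"
  unfolding contains_def
proof (elim exE conjE)
  fix f
  assume f1: "\<forall>s t. s < t \<and> t < length y \<longrightarrow> f s < f t"
    and f2: "\<forall>s<length y. f s < length x"
  have "inj_on f {0..<length y}"
    unfolding inj_on_def using mono_iff(2)[OF f1] by auto
  moreover have "f ` {0..<length y} \<subseteq> {0..<length x}" using f2 by auto
  ultimately have "card {0..<length y} \<le> card {0..<length x}"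
    by (rule card_inj_on_le) simp
  then show ?thesis by simp
qed

lemma contains_antisym:
  assumes "isperm u" "isperm v" "contains u v" "contains v u"
  shows "u = v"
proof -
  have len: "length u = length v" using contains_len assms(3,4) by (simp add: le_antisym)
  obtain f where f1: "\<forall>s t. s < t \<and> t < length v \<longrightarrow> f s < f t"
    and f2: "\<forall>s<length v. f s < length u"
    and f3: "\<forall>s<length v. \<forall>t<length v. (u ! f s < u ! f t) = (v ! s < v ! t) \<and> (u ! f s = u ! f t) = (v ! s = v ! t)"
    using assms(3) unfolding contains_def by blast
  have "\<forall>s<length v. f s = s" using mono_id[OF f1] f2 len by simp
  then show ?thesis
    using perm_unique[OF assms(1,2) len] f3 len by simp
qed

lemma gp_iff: "gamma x = gamma y \<longleftrightarrow> pp y = pp x"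
  using gamma_eq_pp[of x y] pp_eq_gamma[of y x] by metis

lemma cls_eq: "x \<in> Cay \<Longrightarrow> cay_equiv `` {x} = {y \<in> Cay. pp y = pp x}"
  unfolding cay_equiv_def by (simp add: gp_iff)

lemma rep_in: "x \<in> Cay \<Longrightarrow> pp x \<in> cay_equiv `` {x}"
proof -
  assume x: "x \<in> Cay"
  have "pp x \<in> Cay" "pp (pp x) = pp x" by (rule pp_Cay, rule pp_pp)
  then show ?thesis using cls_eq[OF x] by simp
qed

lemma ge_iff:
  assumes "x \<in> Cay" "y \<in> Cay"
  shows "class_ge (cay_equiv `` {x}) (cay_equiv `` {y}) \<longleftrightarrow> contains (pp x) (pp y)"
proof
  assume "class_ge (cay_equiv `` {x}) (cay_equiv `` {y})"
  then obtain x' y' where h: "x' \<in> cay_equiv `` {x}" "y' \<in> cay_equiv `` {y}" "contains x' y'"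
    unfolding class_ge_def by (elim bexE)
  have "pp x' = pp x" "pp y' = pp y" using h(1,2) cls_eq[OF assms(1)] cls_eq[OF assms(2)] by auto
  then show "contains (pp x) (pp y)" using contains_pp[OF h(3)] by simp
next
  assume "contains (pp x) (pp y)"
  then show "class_ge (cay_equiv `` {x}) (cay_equiv `` {y})"
    unfolding class_ge_def using rep_in[OF assms(1)] rep_in[OF assms(2)] by (intro bexI)
qed

theorem proposition4p15:
  shows "partial_order_on Cay_classes
           {(X, Y). X \<in> Cay_classes \<and> Y \<in> Cay_classes \<and> class_ge X Y}"
  unfolding partial_order_on_def preorder_on_def
proof (intro conjI)
  show "{(X, Y). X \<in> Cay_classes \<and> Y \<in> Cay_classes \<and> class_ge X Y} \<subseteq> Cay_classes \<times> Cay_classes"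
    by auto
  show "refl_on Cay_classes {(X, Y). X \<in> Cay_classes \<and> Y \<in> Cay_classes \<and> class_ge X Y}"
    unfolding refl_on_def
  proof
    fix X assume X: "X \<in> Cay_classes"
    then obtain x where "X = cay_equiv `` {x}" "x \<in> Cay"
      unfolding Cay_classes_def by (auto elim: quotientE)
    then show "(X, X) \<in> {(X, Y). X \<in> Cay_classes \<and> Y \<in> Cay_classes \<and> class_ge X Y}"
      using X ge_iff contains_refl by auto
  qed
  show "trans {(X, Y). X \<in> Cay_classes \<and> Y \<in> Cay_classes \<and> class_ge X Y}"
    unfolding trans_def
  proof (intro allI impI)
    fix X Y Z
    assume a: "(X, Y) \<in> {(X, Y). X \<in> Cay_classes \<and> Y \<in> Cay_classes \<and> class_ge X Y}"
      and b: "(Y, Z) \<in> {(X, Y). X \<in> Cay_classes \<and> Y \<in> Cay_classes \<and> class_ge X Y}"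
    obtain x where x: "X = cay_equiv `` {x}" "x \<in> Cay"
      using a unfolding Cay_classes_def by (auto elim: quotientE)
    obtain y where y: "Y = cay_equiv `` {y}" "y \<in> Cay"
      using a unfolding Cay_classes_def by (auto elim: quotientE)
    obtain z where z: "Z = cay_equiv `` {z}" "z \<in> Cay"
      using b unfolding Cay_classes_def by (auto elim: quotientE)
    have "contains (pp x) (pp y)" "contains (pp y) (pp z)"
      using a b x y z ge_iff by auto
    then have "contains (pp x) (pp z)" by (rule contains_trans)
    then show "(X, Z) \<in> {(X, Y). X \<in> Cay_classes \<and> Y \<in> Cay_classes \<and> class_ge X Y}"
      using a b x z ge_iff by auto
  qed
  show "antisym {(X, Y). X \<in> Cay_classes \<and> Y \<in> Cay_classes \<and> class_ge X Y}"
    unfolding antisym_def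
  proof (intro allI impI)
    fix X Y
    assume a: "(X, Y) \<in> {(X, Y). X \<in> Cay_classes \<and> Y \<in> Cay_classes \<and> class_ge X Y}"
      and b: "(Y, X) \<in> {(X, Y). X \<in> Cay_classes \<and> Y \<in> Cay_classes \<and> class_ge X Y}"
    obtain x where x: "X = cay_equiv `` {x}" "x \<in> Cay"
      using a unfolding Cay_classes_def by (auto elim: quotientE)
    obtain y where y: "Y = cay_equiv `` {y}" "y \<in> Cay"
      using a unfolding Cay_classes_def by (auto elim: quotientE)
    have "contains (pp x) (pp y)" "contains (pp y) (pp x)"
      using a b x y ge_iff by auto
    then have "pp x = pp y" using contains_antisym isperm_pp by blast
    then show "X = Y" using x y cls_eq by simp
  qed
qed

end
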